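(* Let $\nu\in\mathbb{N}$, let $(X,d)$ be a $\nu$-generalized metric space, and let $\{x_n\}_{n\in\mathbb{N}}$ be a sequence in $X$ whose terms $x_n$ $(n\in\mathbb{N})$ are pairwise distinct. Suppose that for every $\epsilon>0$ and for any two subsequences $\{x_{p_i}\}$ and $\{x_{q_i}\}$ of $\{x_n\}$, if $\limsup_{i\to\infty} d(x_{p_i},x_{q_i})\le\epsilon$, then there is $N$ such that $d(x_{p_i+1},x_{q_i+1})\le\epsilon$ for all $i\ge N$. If $d(x_n,x_{n+1})\to0$ as $n\to\infty$, then $\{x_n\}$ is $\nu$-Cauchy.
   Context: Let $X$ be a nonempty set, $d:X\times X\to[0,\infty)$, and $\nu\in\mathbb{N}$. $(X,d)$ is a $\nu$-generalized metric space if: (1) $d(x,y)=0$ iff $x=y$; (2) $d(x,y)=d(y,x)$ for all $x,y$; (3) $d(x,y)\le d(x,u_1)+d(u_1,u_2)+\dots+d(u_\nu,y)$ for every set $\{x,u_1,\dots,u_\nu,y\}$ of $\nu+2$ pairwise distinct elements of $X$. For $k\in\mathbb{N}$, a sequence $\{x_n\}$ in $X$ is $k$-Cauchy if $\lim_{n\to\infty}\sup\{d(x_n,x_{n+1+mk}): m\in\mathbb{Z}^+\}=0$, where $\mathbb{Z}^+$ denotes the nonnegative integers. A subsequence $\{x_{p_i}\}$ means $p_1<p_2<\cdots$ in $\mathbb{N}$. *)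

theory Defs
  imports "HOL-Analysis.Analysis"
begin

definition path_len :: "('a \<Rightarrow> 'a \<Rightarrow> real) \<Rightarrow> 'a list \<Rightarrow> real" where
  "path_len d p = (\<Sum>i<length p - 1. d (p ! i) (p ! Suc i))"

definition gen_metric_space :: "nat \<Rightarrow> 'a set \<Rightarrow> ('a \<Rightarrow> 'a \<Rightarrow> real) \<Rightarrow> bool" where
  "gen_metric_space \<nu> X d \<longleftrightarrow> X \<noteq> {} \<and>
     (\<forall>x\<in>X. \<forall>y\<in>X. d x y \<ge> 0) \<and>
     (\<forall>x\<in>X. \<forall>y\<in>X. d x y = 0 \<longleftrightarrow> x = y) \<and>
     (\<forall>x\<in>X. \<forall>y\<in>X. d x y = d y x) \<and>
     (\<forall>x\<in>X. \<forall>y\<in>X. \<forall>us. length us = \<nu> \<and> set us \<subseteq> X \<and> distinct (x # us @ [y])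
         \<longrightarrow> d x y \<le> path_len d (x # us @ [y]))"

definition k_cauchy :: "nat \<Rightarrow> ('a \<Rightarrow> 'a \<Rightarrow> real) \<Rightarrow> (nat \<Rightarrow> 'a) \<Rightarrow> bool" where
  "k_cauchy k d x \<longleftrightarrow>
     ((\<lambda>n. SUP m. ereal (d (x n) (x (n + 1 + m * k)))) \<longlonglongrightarrow> 0)"

end

theory Submission
  imports Defs
begin

lemma path_len_cons:
  assumes "w \<noteq> []"
  shows "path_len d (u # w) = d u (hd w) + path_len d w"
proof -
  obtain v rest where w: "w = v # rest" using assms by (cases w) auto
  show ?thesis unfolding w path_len_def
    by (simp add: sum.lessThan_Suc_shift del: sum.lessThan_Suc)
qed

lemma path_len_upt:
  "path_len d (map x [b..<b+Suc k]) = (\<Sum>j<k. d (x (b+j)) (x (b + Suc j)))"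
  unfolding path_len_def by (intro sum.cong) (auto simp del: upt_Suc)

lemma tri_lemma:
  assumes gm: "gen_metric_space \<nu> X d" and nu: "\<nu> \<ge> 1" and xX: "\<And>n. x n \<in> X"
    and inj: "inj x" and ab: "a+1 < b"
  shows "d (x a) (x (b+\<nu>-1)) \<le> d (x a) (x (a+1)) + d (x (a+1)) (x b)
           + (\<Sum>j<\<nu>-1. d (x (b+j)) (x (b+Suc j)))"
proof -
  obtain k where k: "\<nu> = Suc k" using nu by (cases \<nu>) auto
  define us where "us = x (a+1) # map x [b..<b+k]"
  have L: "x a # us @ [x (b+\<nu>-1)] = map x (a # (a+1) # [b..<b+Suc k])"
    unfolding us_def k by simp
  have len: "length us = \<nu>" unfolding us_def k by simp
  have set: "set us \<subseteq> X" unfolding us_def using xX by auto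
  have dist: "distinct (x a # us @ [x (b+\<nu>-1)])"
    unfolding L using ab by (auto simp: inj_eq[OF inj] image_iff distinct_map inj_on_subset[OF inj subset_UNIV])
  have "d (x a) (x (b+\<nu>-1)) \<le> path_len d (x a # us @ [x (b+\<nu>-1)])"
  proof -
    from gm have H: "\<forall>u\<in>X. \<forall>v\<in>X. \<forall>us. length us = \<nu> \<and> set us \<subseteq> X \<and> distinct (u # us @ [v])
         \<longrightarrow> d u v \<le> path_len d (u # us @ [v])" unfolding gen_metric_space_def by blast
    show ?thesis using H xX[of a] xX[of "b+\<nu>-1"] len set dist by blast
  qed
  also have "\<dots> = d (x a) (x (a+1)) + d (x (a+1)) (x b) + path_len d (map x [b..<b+Suc k])"
  proof -
    have e1: "path_len d (map x (a # (a+1) # [b..<b+Suc k])) = d (x a) (x (a+1)) + path_len d (map x ((a+1) # [b..<b+Suc k]))"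
      using path_len_cons[of "map x ((a+1) # [b..<b+Suc k])" d "x a"] by simp
    have e2: "path_len d (map x ((a+1) # [b..<b+Suc k])) = d (x (a+1)) (x b) + path_len d (map x [b..<b+Suc k])"
      using path_len_cons[of "map x [b..<b+Suc k]" d "x (a+1)"] by (simp add: hd_map upt_conv_Cons del: upt_Suc)
    show ?thesis unfolding L e1 e2 by simp
  qed
  also have "\<dots> = d (x a) (x (a+1)) + d (x (a+1)) (x b)
           + (\<Sum>j<\<nu>-1. d (x (b+j)) (x (b+Suc j)))"
    using path_len_upt[of d x b k] k by (simp del: upt_Suc)
  finally show ?thesis .
qed

theorem lemma2p1:
  fixes \<nu> :: nat and X :: "'a set" and d :: "'a \<Rightarrow> 'a \<Rightarrow> real" and x :: "nat \<Rightarrow> 'a"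
  assumes "\<nu> \<ge> 1"
    and "gen_metric_space \<nu> X d"
    and "\<And>n. x n \<in> X"
    and "inj x"
    and "\<And>\<epsilon> p q. \<epsilon> > 0 \<Longrightarrow> strict_mono p \<Longrightarrow> strict_mono q \<Longrightarrow>
           limsup (\<lambda>i. ereal (d (x (p i)) (x (q i)))) \<le> ereal \<epsilon> \<Longrightarrow>
           \<exists>N. \<forall>i\<ge>N. d (x (p i + 1)) (x (q i + 1)) \<le> \<epsilon>"
    and "(\<lambda>n. d (x n) (x (Suc n))) \<longlonglongrightarrow> 0"
  shows "k_cauchy \<nu> d x"
proof -
  define D where "D a b = d (x a) (x b)" for a b
  have nonneg: "\<And>a b. D a b \<ge> 0" using assms(2,3) unfolding gen_metric_space_def D_def by auto
  have tri: "\<And>a b. a+1<b \<Longrightarrow> D a (b+\<nu>-1) \<le> D a (a+1) + D (a+1) b + (\<Sum>j<\<nu>-1. D (b+j) (b+Suc j))"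
    unfolding D_def using tri_lemma[OF assms(2,1,3,4)] by blast
  have lim: "\<And>\<delta>. \<delta>>0 \<Longrightarrow> \<exists>N. \<forall>n\<ge>N. D n (Suc n) < \<delta>"
  proof -
    fix \<delta> :: real assume "\<delta> > 0"
    from LIMSEQ_D[OF assms(6) this] obtain N where N: "\<forall>n\<ge>N. norm (d (x n) (x (Suc n)) - 0) < \<delta>" by blast
    then show "\<exists>N. \<forall>n\<ge>N. D n (Suc n) < \<delta>" proof (intro exI allI impI)
      fix k assume "N \<le> k"
      then have "\<bar>d (x k) (x (Suc k))\<bar> < \<delta>" using N by simp
      then show "D k (Suc k) < \<delta>" unfolding D_def by simp
    qed
  qed
  have main: "\<forall>\<epsilon>>0. \<exists>N. \<forall>n\<ge>N. \<forall>m. D n (n+1+m*\<nu>) \<le> \<epsilon>"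
  proof (rule ccontr)
    assume "\<not> ?thesis"
    then obtain \<epsilon> where \<epsilon>: "\<epsilon> > 0" and bad: "\<And>N. \<exists>n\<ge>N. \<exists>m. D n (n+1+m*\<nu>) > \<epsilon>"
      by (auto simp: not_le)
    obtain N1 where N1: "\<And>n. n\<ge>N1 \<Longrightarrow> D n (Suc n) < \<epsilon>" using lim[OF \<epsilon>] by blast
    have exg: "\<forall>N. \<exists>nm. fst nm \<ge> N \<and> fst nm \<ge> Suc N1 \<and> snd nm \<ge> 1 \<and>
        D (fst nm) (fst nm+1+snd nm*\<nu>) > \<epsilon> \<and> D (fst nm) (fst nm+1+(snd nm-1)*\<nu>) \<le> \<epsilon>"
    proof
      fix N
      obtain n m where n: "n \<ge> max N (Suc N1)" and m: "D n (n+1+m*\<nu>) > \<epsilon>" using bad by blast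
      define m0 where "m0 = (LEAST m. D n (n+1+m*\<nu>) > \<epsilon>)"
      have b0: "D n (n+1+m0*\<nu>) > \<epsilon>" unfolding m0_def by (rule LeastI[of _ m], rule m)
      have m01: "m0 \<ge> 1"
      proof (rule ccontr)
        assume "\<not> m0 \<ge> 1" then have "m0 = 0" by simp
        with b0 have "D n (Suc n) > \<epsilon>" by simp
        moreover have "D n (Suc n) < \<epsilon>" using N1 n by auto
        ultimately show False by simp
      qed
      have lt: "m0 - 1 < (LEAST m. D n (n+1+m*\<nu>) > \<epsilon>)" using m01 unfolding m0_def by simp
      have "\<not> D n (n+1+(m0-1)*\<nu>) > \<epsilon>" by (rule not_less_Least[OF lt])
      then show "\<exists>nm. fst nm \<ge> N \<and> fst nm \<ge> Suc N1 \<and> snd nm \<ge> 1 \<and>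
        D (fst nm) (fst nm+1+snd nm*\<nu>) > \<epsilon> \<and> D (fst nm) (fst nm+1+(snd nm-1)*\<nu>) \<le> \<epsilon>"
        using n b0 m01 by (intro exI[of _ "(n, m0)"]) auto
    qed
    then obtain g where g: "\<And>N. fst (g N) \<ge> N \<and> fst (g N) \<ge> Suc N1 \<and> snd (g N) \<ge> 1 \<and>
        D (fst (g N)) (fst (g N)+1+snd (g N)*\<nu>) > \<epsilon> \<and> D (fst (g N)) (fst (g N)+1+(snd (g N)-1)*\<nu>) \<le> \<epsilon>"
      by metis
    define h where "h = rec_nat 0 (\<lambda>i hi. fst (g hi) + snd (g hi)*\<nu> + 1)"
    have h0: "h 0 = 0" and hS: "\<And>i. h (Suc i) = fst (g (h i)) + snd (g (h i))*\<nu> + 1"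
      by (simp_all add: h_def)
    define n where "n i = fst (g (h i))" for i
    define m where "m i = snd (g (h i))" for i
    have nh: "\<And>i. n i \<ge> h i" and nN1: "\<And>i. n i \<ge> Suc N1" and m1: "\<And>i. m i \<ge> 1"
      and badi: "\<And>i. D (n i) (n i+1+m i*\<nu>) > \<epsilon>"
      and goodi: "\<And>i. D (n i) (n i+1+(m i-1)*\<nu>) \<le> \<epsilon>"
      unfolding n_def m_def using g by auto
    have nS: "\<And>i. n (Suc i) \<ge> n i + m i*\<nu> + 1"
      using nh hS unfolding n_def m_def by metis
    define p where "p i = n i - 1" for i
    define q where "q i = n i + m i * \<nu>" for i
    have smp: "strict_mono p"
      unfolding strict_mono_Suc_iff p_def
    proof
      fix i have "n (Suc i) \<ge> n i + 1" using nS[of i] by simp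
      then show "n i - 1 < n (Suc i) - 1" using nN1[of i] by simp
    qed
    have smq: "strict_mono q"
      unfolding strict_mono_Suc_iff q_def
    proof
      fix i show "n i + m i * \<nu> < n (Suc i) + m (Suc i) * \<nu>" using nS[of i] by simp
    qed
    define b where "b i = n i + 1 + (m i - 1)*\<nu>" for i
    have bq: "\<And>i. b i + \<nu> - 1 = q i"
    proof -
      fix i obtain k where "m i = Suc k" using m1[of i] by (cases "m i") auto
      then show "b i + \<nu> - 1 = q i" unfolding b_def q_def using assms(1) by simp
    qed
    have pn: "\<And>i. p i + 1 = n i" unfolding p_def using nN1 by (metis Suc_le_D diff_Suc_1 Suc_eq_plus1)
    have bp: "\<And>i. p i + 1 < b i" using pn unfolding b_def by simp
    have bound: "\<And>i. D (p i) (q i) \<le> \<epsilon> + D (p i) (Suc (p i)) + (\<Sum>j<\<nu>-1. D (b i+j) (b i+Suc j))"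
    proof -
      fix i
      have "D (p i) (q i) \<le> D (p i) (p i+1) + D (p i+1) (b i) + (\<Sum>j<\<nu>-1. D (b i+j) (b i+Suc j))"
        using tri[OF bp[of i]] bq[of i] by simp
      moreover have "D (p i+1) (b i) \<le> \<epsilon>" using goodi[of i] pn[of i] unfolding b_def by simp
      ultimately show "D (p i) (q i) \<le> \<epsilon> + D (p i) (Suc (p i)) + (\<Sum>j<\<nu>-1. D (b i+j) (b i+Suc j))"
        by simp
    qed
    have ls: "limsup (\<lambda>i. ereal (D (p i) (q i))) \<le> ereal \<epsilon>"
    proof (rule ereal_le_epsilon2)
      fix \<delta> :: real assume \<delta>: "\<delta> > 0"
      have nu0: "real \<nu> > 0" using assms(1) by simp
      obtain N2 where N2: "\<And>k. k \<ge> N2 \<Longrightarrow> D k (Suc k) < \<delta> / real \<nu>"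
        using lim[of "\<delta> / real \<nu>"] \<delta> nu0 by auto
      have "eventually (\<lambda>i. ereal (D (p i) (q i)) \<le> ereal \<epsilon> + ereal \<delta>) sequentially"
        unfolding eventually_sequentially
      proof (intro exI allI impI)
        fix i assume i: "i \<ge> N2"
        have pi: "p i \<ge> N2" using seq_suble[OF smp, of i] i by simp
        have s1: "D (p i) (Suc (p i)) \<le> \<delta> / real \<nu>" using N2[OF pi] by simp
        have "(\<Sum>j<\<nu>-1. D (b i+j) (b i+Suc j)) \<le> real (card {..<\<nu>-1}) * (\<delta> / real \<nu>)"
        proof (rule sum_bounded_above)
          fix j assume "j \<in> {..<\<nu>-1}"
          have "b i + j \<ge> N2" using pi bp[of i] by simp
          then show "D (b i+j) (b i+Suc j) \<le> \<delta> / real \<nu>" using N2[of "b i + j"] by simp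
        qed
        also have "\<dots> = (real \<nu> - 1) * (\<delta> / real \<nu>)" using assms(1) by (simp add: of_nat_diff)
        finally have s2: "(\<Sum>j<\<nu>-1. D (b i+j) (b i+Suc j)) \<le> (real \<nu> - 1) * (\<delta> / real \<nu>)" .
        have "(real \<nu> - 1) * (\<delta> / real \<nu>) + \<delta> / real \<nu> = \<delta>" using nu0 by (simp add: field_simps)
        then have "D (p i) (q i) \<le> \<epsilon> + \<delta>" using bound[of i] s1 s2 by linarith
        then show "ereal (D (p i) (q i)) \<le> ereal \<epsilon> + ereal \<delta>" by simp
      qed
      then show "limsup (\<lambda>i. ereal (D (p i) (q i))) \<le> ereal \<epsilon> + ereal \<delta>"
        by (rule Limsup_bounded)
    qed
    obtain N3 where N3: "\<forall>i\<ge>N3. d (x (p i + 1)) (x (q i + 1)) \<le> \<epsilon>"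
      using assms(5)[OF \<epsilon> smp smq] ls unfolding D_def by blast
    have "d (x (p N3 + 1)) (x (q N3 + 1)) \<le> \<epsilon>" using N3 by blast
    then have "D (n N3) (n N3 + 1 + m N3 * \<nu>) \<le> \<epsilon>"
      using pn[of N3] unfolding D_def q_def by (simp add: add.commute add.left_commute)
    with badi[of N3] show False by simp
  qed
  define S where "S k = (SUP mm. ereal (D k (k+1+mm*\<nu>)))" for k
  have S0: "\<And>k. S k \<ge> 0" unfolding S_def
    by (rule SUP_upper2[of 0]) (use nonneg in auto)
  have Sle: "\<And>e. e > 0 \<Longrightarrow> eventually (\<lambda>k. S k \<le> ereal e) sequentially"
  proof -
    fix e :: real assume "e > 0"
    then obtain N where N: "\<forall>k\<ge>N. \<forall>mm. D k (k+1+mm*\<nu>) \<le> e" using main by blast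
    show "eventually (\<lambda>k. S k \<le> ereal e) sequentially"
      unfolding eventually_sequentially S_def
    proof (intro exI allI impI)
      fix k assume "N \<le> k"
      then show "(SUP mm. ereal (D k (k+1+mm*\<nu>))) \<le> ereal e"
        by (intro SUP_least) (use N in simp)
    qed
  qed
  have "S \<longlonglongrightarrow> 0"
  proof (rule order_tendstoI)
    fix a :: ereal assume "a < 0"
    then show "eventually (\<lambda>k. a < S k) sequentially" using S0 by (intro always_eventually allI) (rule less_le_trans)
  next
    fix a :: ereal assume a: "0 < a"
    obtain z where z: "0 < z" "z < a" using dense[OF a] by blast
    then obtain e where ze: "z = ereal e" by (cases z) auto
    with z have "e > 0" by simp
    from Sle[OF this] show "eventually (\<lambda>k. S k < a) sequentially"
      by eventually_elim (use z ze in auto)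
  qed
  then show ?thesis unfolding k_cauchy_def S_def D_def by simp
qed

end
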